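(* Let $n_{\max}$ be a parameter, let $W$ be a (sufficiently large) power-of-two polynomial in $n_{\max}$, and let $h : [U] \to [W]$ be the tabulation weight function defined as follows. Write each key $x \in [U]$ as $x = x_{\mathrm{high}} \cdot W^4 + x_{\mathrm{mid}} \cdot W + x_{\mathrm{low}}$ with $x_{\mathrm{low}} \in [W]$, $x_{\mathrm{mid}} \in [W^3]$, and set $x_{\mathrm{midlow}} = x_{\mathrm{mid}} \cdot W + x_{\mathrm{low}} \in [W^4]$. Let $A_1,\dots,A_{m}$, with $m = \operatorname{poly}(W)$, be independent random arrays of length $W^4$, each of which is the concatenation of $W^3$ independent uniformly random permutations of $[W]$, and let $f : [U/W^4] \to [m]$ be a random function drawn from a pairwise-independent family (independently of the arrays). Define $h(x) = A_{f(x_{\mathrm{high}})}[x_{\mathrm{midlow}}]$. Then for any set $S = \{x_1,\dots,x_n\} \subseteq [U]$ of $n \le n_{\max}$ keys, with probability at least $1 - 1/\operatorname{poly}(n_{\max})$ (over the random choice of the arrays and $f$), the weights $h(x_1),\dots,h(x_n)$ are pairwise distinct.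
   Context: $[k]$ denotes $\{0,1,\dots,k-1\}$. The number $m$ of arrays is a sufficiently large polynomial in $W$, so that two distinct inputs collide under the pairwise-independent $f$ with probability at most $1/\operatorname{poly}(W)$. *)

theory Defs
  imports "HOL-Probability.Probability"
begin

text \<open>Arrays of length W^4 that are the concatenation of W^3 permutations of [W].
  Entries outside [W^4] are fixed (extensional), so the set is finite.\<close>
definition perm_block_arrays :: "nat \<Rightarrow> (nat \<Rightarrow> nat) set" where
  "perm_block_arrays W =
     {a \<in> {..<W^4} \<rightarrow>\<^sub>E {..<W}.
        \<forall>b<W^3. bij_betw (\<lambda>k. a (b * W + k)) {..<W} {..<W}}"

definition random_arrays :: "nat \<Rightarrow> nat \<Rightarrow> (nat \<Rightarrow> nat \<Rightarrow> nat) pmf" where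
  "random_arrays W m = pmf_of_set ({..<m} \<rightarrow>\<^sub>E perm_block_arrays W)"

definition pairwise_indep_family :: "nat set \<Rightarrow> nat \<Rightarrow> (nat \<Rightarrow> nat) pmf \<Rightarrow> bool" where
  "pairwise_indep_family D m F \<longleftrightarrow>
     (\<forall>a\<in>D. \<forall>i<m. measure_pmf.prob F {f. f a = i} = 1 / real m) \<and>
     (\<forall>a\<in>D. \<forall>b\<in>D. a \<noteq> b \<longrightarrow> (\<forall>i<m. \<forall>j<m.
        measure_pmf.prob F {f. f a = i \<and> f b = j} = 1 / (real m)^2))"

definition tab_weight :: "nat \<Rightarrow> (nat \<Rightarrow> nat \<Rightarrow> nat) \<Rightarrow> (nat \<Rightarrow> nat) \<Rightarrow> nat \<Rightarrow> nat" where
  "tab_weight W A f x = A (f (x div W^4)) (x mod W^4)"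

end

theory Submission
  imports Defs
begin

lemma blk_lt: fixes W b k :: nat assumes "b < W^3" "k < W" shows "b * W + k < W^4"
proof -
  have "b * W + k < (b+1) * W" using assms by simp
  also have "... \<le> W^3 * W" using assms by (intro mult_right_mono) auto
  finally show ?thesis by (simp add: power_Suc2[symmetric] numeral_eq_Suc)
qed

lemma div_lt3: fixes W p :: nat assumes "p < W^4" shows "p div W < W^3"
proof -
  have "W^4 = W^3 * W" by (simp add: power_Suc2[symmetric] numeral_eq_Suc)
  then show ?thesis using assms by (metis less_mult_imp_div_less)
qed

lemma modcanc: "(u::nat) < W \<Longrightarrow> v < W \<Longrightarrow> (u + s) mod W = (v + s) mod W \<Longrightarrow> u = v"
proof -
  have *: "u = v" if "v \<le> u" "u < W" "(u + s) mod W = (v + s) mod W" for u v :: nat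
  proof -
    have "W dvd (u + s) - (v + s)" using that mod_eq_dvd_iff_nat[of "v+s" "u+s" W] by simp
    then have "W dvd u - v" by simp
    moreover have "u - v < W" using that by simp
    ultimately have "u - v = 0" by (meson dvd_imp_le not_less neq0_conv)
    then show ?thesis using that by simp
  qed
  assume "u < W" "v < W" "(u + s) mod W = (v + s) mod W"
  then show "u = v" using *[of v u] *[of u v] by (cases "v \<le> u") auto
qed

lemma bij_shift_mod: fixes W s :: nat assumes "W > 0"
  shows "bij_betw (\<lambda>v. (v + s) mod W) {..<W} {..<W}"
proof -
  have inj: "inj_on (\<lambda>v. (v + s) mod W) {..<W}"
  proof (rule inj_onI)
    fix u v assume "u \<in> {..<W}" "v \<in> {..<W}" "(u + s) mod W = (v + s) mod W"
    then show "u = v" using modcanc by auto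
  qed
  have "(\<lambda>v. (v + s) mod W) ` {..<W} = {..<W}"
    by (rule endo_inj_surj) (use inj assms in auto)
  then show ?thesis using inj by (simp add: bij_betw_def)
qed

definition shiftA :: "nat \<Rightarrow> nat \<Rightarrow> nat \<Rightarrow> nat \<Rightarrow> (nat\<Rightarrow>nat\<Rightarrow>nat) \<Rightarrow> (nat\<Rightarrow>nat\<Rightarrow>nat)" where
  "shiftA W j b s A = (\<lambda>i k. if i = j \<and> k div W = b \<and> k < W^4 then (A i k + s) mod W else A i k)"

lemma pba_pie: "a \<in> perm_block_arrays W \<Longrightarrow> a \<in> {..<W^4} \<rightarrow>\<^sub>E {..<W}"
  unfolding perm_block_arrays_def by blast

lemma pba_blk: "a \<in> perm_block_arrays W \<Longrightarrow> b < W^3 \<Longrightarrow> bij_betw (\<lambda>k. a (b * W + k)) {..<W} {..<W}"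
  unfolding perm_block_arrays_def by blast

lemma pba_val: "a \<in> perm_block_arrays W \<Longrightarrow> k < W^4 \<Longrightarrow> a k < W"
  using PiE_mem[OF pba_pie, of a W k] by simp

lemma pba_ext: "a \<in> perm_block_arrays W \<Longrightarrow> \<not> k < W^4 \<Longrightarrow> a k = undefined"
  using PiE_arb[OF pba_pie, of a W k] by simp

lemma block_shift:
  fixes W :: nat
  assumes a: "a \<in> perm_block_arrays W" and W: "W > 0"
  shows "(\<lambda>k. if k div W = b \<and> k < W^4 then (a k + s) mod W else a k) \<in> perm_block_arrays W"
    (is "?a \<in> _")
proof -
  have A1: "?a \<in> {..<W^4} \<rightarrow>\<^sub>E {..<W}"
    using pba_val[OF a] pba_ext[OF a] W by (intro PiE_I) auto
  have A2: "bij_betw (\<lambda>k. ?a (b' * W + k)) {..<W} {..<W}" if b': "b' < W^3" for b'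
  proof (cases "b' = b")
    case True
    have bb: "bij_betw (\<lambda>k. a (b' * W + k)) {..<W} {..<W}"
      using a b' by (rule pba_blk)
    have "bij_betw ((\<lambda>v. (v + s) mod W) \<circ> (\<lambda>k. a (b' * W + k))) {..<W} {..<W}"
      by (rule bij_betw_trans[OF bb bij_shift_mod[OF W]])
    moreover have "((\<lambda>v. (v + s) mod W) \<circ> (\<lambda>k. a (b' * W + k))) k = ?a (b' * W + k)" if "k \<in> {..<W}" for k
    proof -
      have "(b' * W + k) div W = b'" using that W by simp
      moreover have "b' * W + k < W^4" using blk_lt[OF b'] that by simp
      ultimately show ?thesis using True by simp
    qed
    ultimately show ?thesis using bij_betw_cong[of "{..<W}" "(\<lambda>v. (v + s) mod W) \<circ> (\<lambda>k. a (b' * W + k))" "\<lambda>k. ?a (b' * W + k)" "{..<W}"] by blast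
  next
    case False
    have bb: "bij_betw (\<lambda>k. a (b' * W + k)) {..<W} {..<W}"
      using a b' by (rule pba_blk)
    moreover have "a (b' * W + k) = ?a (b' * W + k)" if "k \<in> {..<W}" for k
    proof -
      have "(b' * W + k) div W = b'" using that W by simp
      then show ?thesis using False by simp
    qed
    ultimately show ?thesis using bij_betw_cong[of "{..<W}" "\<lambda>k. a (b' * W + k)" "\<lambda>k. ?a (b' * W + k)" "{..<W}"] by blast
  qed
  show ?thesis unfolding perm_block_arrays_def mem_Collect_eq using A1 A2 by blast
qed

lemma shift_in:
  fixes W :: nat
  assumes A: "A \<in> {..<m} \<rightarrow>\<^sub>E perm_block_arrays W" and W: "W > 0" and j: "j < m"
  shows "shiftA W j b s A \<in> {..<m} \<rightarrow>\<^sub>E perm_block_arrays W"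
proof -
  have eq: "shiftA W j b s A i = A i" if "i \<noteq> j" for i
    using that unfolding shiftA_def by (intro ext) simp
  have P1: "shiftA W j b s A i \<in> perm_block_arrays W" if "i < m" for i
  proof (cases "i = j")
    case True
    have Aj: "A j \<in> perm_block_arrays W" using PiE_mem[OF A, of j] j by simp
    have e: "shiftA W j b s A j = (\<lambda>k. if k div W = b \<and> k < W^4 then (A j k + s) mod W else A j k)"
      by (simp add: shiftA_def)
    show ?thesis unfolding True e by (rule block_shift[OF Aj W])
  next
    case False
    have "A i \<in> perm_block_arrays W" using PiE_mem[OF A, of i] that by simp
    then show ?thesis using eq[OF False] by simp
  qed
  have P2: "shiftA W j b s A i = undefined" if "i \<notin> {..<m}" for i
  proof -
    have "i \<noteq> j" using that j by auto
    then show ?thesis using eq PiE_arb[OF A, of i] that by simp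
  qed
  show ?thesis by (rule PiE_I) (use P1 P2 in auto)
qed

lemma shift_out: "\<not> (i = j \<and> k div W = b \<and> k < W^4) \<Longrightarrow> shiftA W j b s A i k = A i k"
  unfolding shiftA_def by (simp only: if_False)

lemma shift_in_blk: "k div W = b \<Longrightarrow> k < W^4 \<Longrightarrow> shiftA W j b s A j k = (A j k + s) mod W"
  unfolding shiftA_def by simp

lemma shift_inv:
  fixes W :: nat
  assumes A: "A \<in> {..<m} \<rightarrow>\<^sub>E perm_block_arrays W" and W: "W > 0" and st: "s + t = W"
    and j: "j < m"
  shows "shiftA W j b t (shiftA W j b s A) = A"
proof (intro ext)
  fix i k
  show "shiftA W j b t (shiftA W j b s A) i k = A i k"
  proof (cases "i = j \<and> k div W = b \<and> k < W^4")
    case True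
    have "A j \<in> perm_block_arrays W" using A j by auto
    then have lt: "A j k < W" using True pba_val by blast
    have "((A i k + s) mod W + t) mod W = (A i k + s + t) mod W" by (simp add: mod_add_left_eq)
    also have "... = (A i k + W) mod W" using st by (simp add: add.assoc)
    also have "... = A i k" using lt True by simp
    finally have eq: "((A i k + s) mod W + t) mod W = A i k" .
    have "shiftA W j b t (shiftA W j b s A) i k = (shiftA W j b s A j k + t) mod W"
      using True shift_in_blk[of k W b] by blast
    also have "... = ((A j k + s) mod W + t) mod W"
      using True shift_in_blk[of k W b] by metis
    finally show ?thesis using eq True by simp
  next
    case False
    show ?thesis using shift_out[OF False, of t "shiftA W j b s A"] shift_out[OF False, of s A] by simp
  qed
qed

lemma pba_finite: "finite (perm_block_arrays W)"
proof (rule finite_subset)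
  show "perm_block_arrays W \<subseteq> {..<W^4} \<rightarrow>\<^sub>E {..<W}" using pba_pie by blast
  show "finite ({..<W^4} \<rightarrow>\<^sub>E {..<W})" by (rule finite_PiE) auto
qed

lemma pba_nonempty:
  fixes W :: nat assumes W: "W > 0"
  shows "(\<lambda>k. if k < W^4 then k mod W else undefined) \<in> perm_block_arrays W" (is "?a \<in> _")
proof -
  have A1: "?a \<in> {..<W^4} \<rightarrow>\<^sub>E {..<W}" using W by (intro PiE_I) auto
  have A2: "bij_betw (\<lambda>k. ?a (b * W + k)) {..<W} {..<W}" if b: "b < W^3" for b
  proof -
    have "id k = ?a (b * W + k)" if "k \<in> {..<W}" for k
      using blk_lt[OF b, of k] that by simp
    then show ?thesis using bij_betw_cong[of "{..<W}" id "\<lambda>k. ?a (b * W + k)" "{..<W}"] bij_betw_id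
      by blast
  qed
  show ?thesis unfolding perm_block_arrays_def mem_Collect_eq using A1 A2 by blast
qed

lemma Omega_finite: "finite ({..<m::nat} \<rightarrow>\<^sub>E perm_block_arrays W)"
  by (rule finite_PiE) (auto simp: pba_finite)

lemma Omega_nonempty:
  fixes W :: nat assumes W: "W > 0"
  shows "({..<m::nat} \<rightarrow>\<^sub>E perm_block_arrays W) \<noteq> {}"
proof -
  have "(\<lambda>i. if i < m then (\<lambda>k. if k < W^4 then k mod W else undefined) else undefined)
     \<in> {..<m::nat} \<rightarrow>\<^sub>E perm_block_arrays W"
    using pba_nonempty[OF W] by (intro PiE_I) auto
  then show ?thesis by blast
qed

lemma Omega_val:
  assumes "A \<in> {..<m::nat} \<rightarrow>\<^sub>E perm_block_arrays W" "i < m" "k < W^4"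
  shows "A i k < W"
proof -
  have "A i \<in> perm_block_arrays W" using PiE_mem[OF assms(1), of i] assms(2) by simp
  then show ?thesis using pba_val assms(3) by blast
qed

lemma prob_entries_eq:
  fixes W :: nat
  assumes W: "W > 0" and i: "i < m" and j: "j < m" and p: "p < W^4" and q: "q < W^4"
    and ne: "(i, p div W) \<noteq> (j, q div W)"
  shows "measure_pmf.prob (random_arrays W m) {A. A i p = A j q} = 1 / real W"
proof -
  define \<Omega> where "\<Omega> = {..<m} \<rightarrow>\<^sub>E perm_block_arrays W"
  define b where "b = q div W"
  define E where "E s = {A \<in> \<Omega>. A j q = (A i p + s) mod W}" for s
  have fin: "finite \<Omega>" unfolding \<Omega>_def by (rule Omega_finite)
  have nem: "\<Omega> \<noteq> {}" unfolding \<Omega>_def by (rule Omega_nonempty[OF W])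
  have vi: "A i p < W" if "A \<in> \<Omega>" for A using Omega_val that i p unfolding \<Omega>_def by blast
  have vj: "A j q < W" if "A \<in> \<Omega>" for A using Omega_val that j q unfolding \<Omega>_def by blast
  have nb: "\<not> (i = j \<and> p div W = b \<and> p < W^4)" using ne unfolding b_def by auto
  have sp: "shiftA W j b s A i p = A i p" for s A by (rule shift_out[OF nb])
  have sq: "shiftA W j b s A j q = (A j q + s) mod W" for s A
    by (rule shift_in_blk) (use q in \<open>auto simp: b_def\<close>)
  have sO: "shiftA W j b s A \<in> \<Omega>" if "A \<in> \<Omega>" for s A
    using shift_in[OF _ W j] that unfolding \<Omega>_def by blast
  have sinv: "shiftA W j b t (shiftA W j b s A) = A" if "A \<in> \<Omega>" "s + t = W" for s t A
    using shift_inv[OF _ W _ j] that unfolding \<Omega>_def by blast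
  have bij: "bij_betw (shiftA W j b s) (E 0) (E s)" if s: "s < W" for s
  proof (rule bij_betw_byWitness[where f' = "shiftA W j b (W - s)"])
    show "\<forall>a\<in>E 0. shiftA W j b (W - s) (shiftA W j b s a) = a"
      using sinv s unfolding E_def by auto
    show "\<forall>a\<in>E s. shiftA W j b s (shiftA W j b (W - s) a) = a"
      using sinv s unfolding E_def by auto
    show "shiftA W j b s ` E 0 \<subseteq> E s"
    proof
      fix A' assume "A' \<in> shiftA W j b s ` E 0"
      then obtain A where A: "A \<in> E 0" and A': "A' = shiftA W j b s A" by blast
      have "A \<in> \<Omega>" "A j q = A i p" using A vi unfolding E_def by auto
      then show "A' \<in> E s" unfolding E_def A' using sO sp sq by auto
    qed
    show "shiftA W j b (W - s) ` E s \<subseteq> E 0"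
    proof
      fix A' assume "A' \<in> shiftA W j b (W - s) ` E s"
      then obtain A where A: "A \<in> E s" and A': "A' = shiftA W j b (W - s) A" by blast
      have AO: "A \<in> \<Omega>" and Aq: "A j q = (A i p + s) mod W" using A unfolding E_def by auto
      have "((A i p + s) mod W + (W - s)) mod W = (A i p + s + (W - s)) mod W"
        by (simp add: mod_add_left_eq)
      also have "... = (A i p + W) mod W" using s by simp
      also have "... = A i p" using vi[OF AO] by simp
      finally have "A' j q = A' i p" unfolding A' sq sp Aq .
      moreover have "A i p mod W = A i p" using vi[OF AO] by simp
      ultimately show "A' \<in> E 0" unfolding E_def A' using sO[OF AO] sp by simp
    qed
  qed
  have cardE: "card (E s) = card (E 0)" if "s < W" for s
    using bij_betw_same_card[OF bij[OF that]] by simp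
  have union: "\<Omega> = (\<Union>s\<in>{..<W}. E s)"
  proof
    show "\<Omega> \<subseteq> (\<Union>s\<in>{..<W}. E s)"
    proof
      fix A assume AO: "A \<in> \<Omega>"
      define s where "s = (A j q + (W - A i p)) mod W"
      have "(A i p + s) mod W = (A i p + (A j q + (W - A i p))) mod W"
        unfolding s_def by (simp add: mod_add_right_eq)
      also have "... = (A j q + W) mod W" using vi[OF AO] by simp
      also have "... = A j q" using vj[OF AO] by simp
      finally have "A \<in> E s" unfolding E_def using AO by simp
      moreover have "s < W" unfolding s_def using W by simp
      ultimately show "A \<in> (\<Union>s\<in>{..<W}. E s)" by blast
    qed
    show "(\<Union>s\<in>{..<W}. E s) \<subseteq> \<Omega>" unfolding E_def by blast
  qed
  have disj: "\<forall>s\<in>{..<W}. \<forall>t\<in>{..<W}. s \<noteq> t \<longrightarrow> E s \<inter> E t = {}"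
  proof (intro ballI impI)
    fix s t assume s: "s \<in> {..<W}" and t: "t \<in> {..<W}" and st: "s \<noteq> t"
    show "E s \<inter> E t = {}"
    proof (rule ccontr)
      assume "E s \<inter> E t \<noteq> {}"
      then obtain A where "A \<in> E s" "A \<in> E t" by blast
      then have "(s + A i p) mod W = (t + A i p) mod W" unfolding E_def by (simp add: add.commute)
      then have "s = t" using modcanc[of s W t "A i p"] s t by simp
      then show False using st by simp
    qed
  qed
  have "card \<Omega> = (\<Sum>s\<in>{..<W}. card (E s))"
  proof -
    have finE: "finite (E s)" for s unfolding E_def using fin by simp
    show ?thesis unfolding union[symmetric] by (rule card_UN_disjoint[of "{..<W}" E, folded union]) (simp_all add: finE disj)
  qed
  also have "... = (\<Sum>s\<in>{..<W}. card (E 0))" by (rule sum.cong[OF refl], rule cardE) simp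
  also have "... = W * card (E 0)" by simp
  finally have cO: "card \<Omega> = W * card (E 0)" .
  have int: "\<Omega> \<inter> {A. A i p = A j q} = E 0"
    unfolding E_def using vi vj by auto
  have "measure_pmf.prob (random_arrays W m) {A. A i p = A j q} = card (E 0) / card \<Omega>"
    unfolding random_arrays_def \<Omega>_def[symmetric] using measure_pmf_of_set[OF nem fin] int by simp
  also have "... = 1 / real W"
  proof -
    have "card \<Omega> > 0" using fin nem by (simp add: card_gt_0_iff)
    then have "card (E 0) > 0" using cO by simp
    then show ?thesis unfolding cO by simp
  qed
  finally show ?thesis .
qed

lemma pair_bind: "pair_pmf R F = bind_pmf F (\<lambda>f. map_pmf (\<lambda>A. (A, f)) R)"
  unfolding pair_pmf_def map_pmf_def by (rule bind_commute_pmf)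

lemma pair_bound:
  fixes R :: "'a pmf" and F :: "'b pmf"
  assumes good: "\<And>f. f \<notin> Bad \<Longrightarrow> measure_pmf.prob R {A. (A, f) \<in> X} \<le> e" and e: "e \<ge> 0"
  shows "measure_pmf.prob (pair_pmf R F) X \<le> e + measure_pmf.prob F Bad"
proof -
  have "emeasure (measure_pmf (pair_pmf R F)) X = (\<integral>\<^sup>+f. emeasure (measure_pmf R) {A. (A, f) \<in> X} \<partial>measure_pmf F)"
    unfolding pair_bind by (simp add: vimage_def)
  also have "... \<le> (\<integral>\<^sup>+f. (ennreal e + indicator Bad f) \<partial>measure_pmf F)"
  proof (rule nn_integral_mono)
    fix f
    show "emeasure (measure_pmf R) {A. (A, f) \<in> X} \<le> ennreal e + indicator Bad f"
    proof (cases "f \<in> Bad")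
      case True
      have "emeasure (measure_pmf R) {A. (A, f) \<in> X} \<le> 1"
        by (simp add: measure_pmf.emeasure_le_1)
      also have "... \<le> ennreal e + indicator Bad f" using True by simp
      finally show ?thesis .
    next
      case False
      have "emeasure (measure_pmf R) {A. (A, f) \<in> X} = ennreal (measure_pmf.prob R {A. (A, f) \<in> X})"
        by (simp add: measure_pmf.emeasure_eq_measure)
      also have "... \<le> ennreal e" using good[OF False] by (simp add: ennreal_leI)
      also have "... \<le> ennreal e + indicator Bad f" by simp
      finally show ?thesis .
    qed
  qed
  also have "... = ennreal e + emeasure (measure_pmf F) Bad"
    by (subst nn_integral_add) (auto simp: measure_pmf.emeasure_space_1)
  also have "... = ennreal (e + measure_pmf.prob F Bad)"
    by (simp add: measure_pmf.emeasure_eq_measure e ennreal_plus)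
  finally have "ennreal (measure_pmf.prob (pair_pmf R F) X) \<le> ennreal (e + measure_pmf.prob F Bad)"
    by (simp only: measure_pmf.emeasure_eq_measure)
  then show ?thesis using e by (subst (asm) ennreal_le_iff) (auto simp: add_nonneg_nonneg)
qed

lemma F_lt:
  assumes F: "pairwise_indep_family D m F" and a: "a \<in> D" and m: "m > 0"
  shows "measure_pmf.prob F {f. m \<le> f a} = 0"
proof -
  have "{f. f a < m} = (\<Union>i\<in>{..<m}. {f. f a = i})" by auto
  then have "measure_pmf.prob F {f. f a < m} = (\<Sum>i\<in>{..<m}. measure_pmf.prob F {f. f a = i})"
    by (simp only:) (rule measure_pmf.finite_measure_finite_Union, auto simp: disjoint_family_on_def)
  also have "... = (\<Sum>i\<in>{..<m}. 1 / real m)"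
    using F a unfolding pairwise_indep_family_def by (intro sum.cong) auto
  also have "... = 1" using m by simp
  finally have p1: "measure_pmf.prob F {f. f a < m} = 1" .
  have "{f. m \<le> f a} = space (measure_pmf F) - {f. f a < m}" by auto
  then show ?thesis using p1 measure_pmf.prob_compl[of "{f. f a < m}" F] by simp
qed

lemma F_coll:
  assumes F: "pairwise_indep_family D m F" and a: "a \<in> D" and c: "c \<in> D" and ac: "a \<noteq> c"
    and m: "m > 0"
  shows "measure_pmf.prob F {f. f a = f c \<and> f a < m} = 1 / real m"
proof -
  have "{f. f a = f c \<and> f a < m} = (\<Union>i\<in>{..<m}. {f. f a = i \<and> f c = i})" by auto
  then have "measure_pmf.prob F {f. f a = f c \<and> f a < m} = (\<Sum>i\<in>{..<m}. measure_pmf.prob F {f. f a = i \<and> f c = i})"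
    by (simp only:) (rule measure_pmf.finite_measure_finite_Union, auto simp: disjoint_family_on_def)
  also have "... = (\<Sum>i\<in>{..<m}. 1 / (real m)^2)"
    using F a c ac unfolding pairwise_indep_family_def by (intro sum.cong) auto
  also have "... = 1 / real m" using m by (simp add: power2_eq_square)
  finally show ?thesis .
qed

lemma same_block_zero:
  fixes W :: nat
  assumes W: "W > 0" and i: "i < m" and p: "p < W^4" and q: "q < W^4" and pq: "p \<noteq> q"
    and blk: "p div W = q div W"
  shows "measure_pmf.prob (random_arrays W m) {A. A i p = A i q} = 0"
proof -
  define \<Omega> where "\<Omega> = {..<m} \<rightarrow>\<^sub>E perm_block_arrays W"
  have fin: "finite \<Omega>" unfolding \<Omega>_def by (rule Omega_finite)
  have nem: "\<Omega> \<noteq> {}" unfolding \<Omega>_def by (rule Omega_nonempty[OF W])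
  have "\<Omega> \<inter> {A. A i p = A i q} = {}"
  proof (rule ccontr)
    assume "\<Omega> \<inter> {A. A i p = A i q} \<noteq> {}"
    then obtain A where AO: "A \<in> \<Omega>" and eq: "A i p = A i q" by blast
    have Ai: "A i \<in> perm_block_arrays W" using PiE_mem[of A "{..<m}" "\<lambda>_. perm_block_arrays W" i] AO i
      unfolding \<Omega>_def by simp
    define b where "b = p div W"
    have b: "b < W^3" unfolding b_def by (rule div_lt3[OF p])
    have bij: "bij_betw (\<lambda>k. A i (b * W + k)) {..<W} {..<W}" by (rule pba_blk[OF Ai b])
    have pe: "p = b * W + p mod W" unfolding b_def by simp
    have qe: "q = b * W + q mod W" unfolding b_def blk by simp
    have "A i (b * W + p mod W) = A i (b * W + q mod W)" using eq pe qe by simp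
    then have "p mod W = q mod W"
      using bij_betw_imp_inj_on[OF bij] W unfolding inj_on_def by simp
    then have "p = q" using pe qe by simp
    then show False using pq by simp
  qed
  then show ?thesis
    unfolding random_arrays_def \<Omega>_def[symmetric] using measure_pmf_of_set[OF nem fin] by simp
qed

lemma entries_le:
  fixes W :: nat
  assumes W: "W > 0" and i: "i < m" and j: "j < m" and p: "p < W^4" and q: "q < W^4"
    and ne: "(i, p) \<noteq> (j, q)"
  shows "measure_pmf.prob (random_arrays W m) {A. A i p = A j q} \<le> 1 / real W"
proof (cases "(i, p div W) = (j, q div W)")
  case True
  then have "i = j" "p \<noteq> q" "p div W = q div W" using ne by auto
  then show ?thesis using same_block_zero[OF W i p q] by simp
next
  case False
  then show ?thesis using prob_entries_eq[OF W i j p q False] by simp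
qed

lemma pair_collision:
  fixes W :: nat
  assumes W: "W > 0" and mW: "m \<ge> W" and F: "pairwise_indep_family ((\<lambda>x. x div W^4) ` {..<U}) m F"
    and x: "x < U" and y: "y < U" and xy: "x \<noteq> y"
  shows "measure_pmf.prob (pair_pmf (random_arrays W m) F)
           {(A, f). tab_weight W A f x = tab_weight W A f y} \<le> 2 / real W"
proof -
  define D where "D = (\<lambda>x. x div W^4) ` {..<U}"
  define hx where "hx = x div W^4"
  define hy where "hy = y div W^4"
  define px where "px = x mod W^4"
  define py where "py = y mod W^4"
  have m: "m > 0" using W mW by simp
  have hxD: "hx \<in> D" unfolding hx_def D_def using x by blast
  have hyD: "hy \<in> D" unfolding hy_def D_def using y by blast
  have FD: "pairwise_indep_family D m F" using F unfolding D_def .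
  have px: "px < W^4" unfolding px_def using W by simp
  have py: "py < W^4" unfolding py_def using W by simp
  define Bad where "Bad = {f. hx \<noteq> hy \<and> f hx = f hy \<and> f hx < m} \<union> {f. m \<le> f hx} \<union> {f. m \<le> f hy}"
  have good: "measure_pmf.prob (random_arrays W m)
      {A. (A, f) \<in> {(A, f). tab_weight W A f x = tab_weight W A f y}} \<le> 1 / real W"
    if nb: "f \<notin> Bad" for f
  proof -
    have fx: "f hx < m" and fy: "f hy < m" and hh: "hx \<noteq> hy \<longrightarrow> f hx \<noteq> f hy"
      using nb unfolding Bad_def by auto
    have ne: "(f hx, px) \<noteq> (f hy, py)"
    proof
      assume eq: "(f hx, px) = (f hy, py)"
      then have "hx = hy" using hh by auto
      moreover have "px = py" using eq by simp
      ultimately have "x = y" unfolding hx_def hy_def px_def py_def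
        by (metis div_mult_mod_eq)
      then show False using xy by simp
    qed
    have "{A. (A, f) \<in> {(A, f). tab_weight W A f x = tab_weight W A f y}} = {A. A (f hx) px = A (f hy) py}"
      unfolding tab_weight_def hx_def hy_def px_def py_def by simp
    then show ?thesis using entries_le[OF W fx fy px py ne] by simp
  qed
  have "measure_pmf.prob (pair_pmf (random_arrays W m) F)
           {(A, f). tab_weight W A f x = tab_weight W A f y} \<le> 1 / real W + measure_pmf.prob F Bad"
    by (rule pair_bound[OF good]) simp_all
  also have "measure_pmf.prob F Bad \<le> 1 / real W"
  proof -
    have "measure_pmf.prob F Bad \<le> measure_pmf.prob F ({f. hx \<noteq> hy \<and> f hx = f hy \<and> f hx < m} \<union> {f. m \<le> f hx}) + measure_pmf.prob F {f. m \<le> f hy}"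
      unfolding Bad_def by (rule measure_Un_le) simp_all
    also have "... \<le> measure_pmf.prob F {f. hx \<noteq> hy \<and> f hx = f hy \<and> f hx < m} + measure_pmf.prob F {f. m \<le> f hx} + measure_pmf.prob F {f. m \<le> f hy}"
      using measure_Un_le[of "{f. hx \<noteq> hy \<and> f hx = f hy \<and> f hx < m}" "measure_pmf F" "{f. m \<le> f hx}"] by simp
    also have "... = measure_pmf.prob F {f. hx \<noteq> hy \<and> f hx = f hy \<and> f hx < m}"
      using F_lt[OF FD hxD m] F_lt[OF FD hyD m] by simp
    also have "... \<le> 1 / real W"
    proof (cases "hx = hy")
      case True then show ?thesis by simp
    next
      case False
      then have "measure_pmf.prob F {f. hx \<noteq> hy \<and> f hx = f hy \<and> f hx < m} = 1 / real m"
        using F_coll[OF FD hxD hyD False m] by simp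
      also have "... \<le> 1 / real W" using W mW by (simp add: frac_le)
      finally show ?thesis .
    qed
    finally show ?thesis .
  qed
  finally show ?thesis by simp
qed

lemma fail_bound:
  fixes W :: nat
  assumes W: "W > 0" and mW: "m \<ge> W" and F: "pairwise_indep_family ((\<lambda>x. x div W^4) ` {..<U}) m F"
    and S: "S \<subseteq> {..<U}"
  shows "measure_pmf.prob (pair_pmf (random_arrays W m) F) {(A, f). \<not> inj_on (tab_weight W A f) S}
     \<le> real (card S)^2 * (2 / real W)"
proof -
  define Off where "Off = {xy \<in> S \<times> S. fst xy \<noteq> snd xy}"
  define B where "B xy = {(A, f). tab_weight W A f (fst xy) = tab_weight W A f (snd xy)}" for xy :: "nat \<times> nat"
  have finS: "finite S" using S finite_subset by blast
  have finO: "finite Off" unfolding Off_def using finS by simp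
  have cO: "card Off \<le> card S ^ 2"
  proof -
    have "card Off \<le> card (S \<times> S)" unfolding Off_def using finS by (intro card_mono) auto
    then show ?thesis using finS by (simp add: card_cartesian_product power2_eq_square)
  qed
  have sub: "{(A, f). \<not> inj_on (tab_weight W A f) S} \<subseteq> (\<Union>xy\<in>Off. B xy)"
  proof
    fix z assume "z \<in> {(A, f). \<not> inj_on (tab_weight W A f) S}"
    then obtain A f where z: "z = (A, f)" and ni: "\<not> inj_on (tab_weight W A f) S" by blast
    then obtain x y where "x \<in> S" "y \<in> S" "x \<noteq> y" "tab_weight W A f x = tab_weight W A f y"
      unfolding inj_on_def by blast
    then have "(x, y) \<in> Off" "z \<in> B (x, y)" unfolding Off_def B_def z by auto
    then show "z \<in> (\<Union>xy\<in>Off. B xy)" by blast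
  qed
  have "measure_pmf.prob (pair_pmf (random_arrays W m) F) {(A, f). \<not> inj_on (tab_weight W A f) S}
      \<le> measure_pmf.prob (pair_pmf (random_arrays W m) F) (\<Union>xy\<in>Off. B xy)"
    by (rule measure_pmf.finite_measure_mono[OF sub]) simp
  also have "... \<le> (\<Sum>xy\<in>Off. measure_pmf.prob (pair_pmf (random_arrays W m) F) (B xy))"
    by (rule measure_pmf.finite_measure_subadditive_finite[OF finO]) simp
  also have "... \<le> (\<Sum>xy\<in>Off. 2 / real W)"
  proof (rule sum_mono)
    fix xy assume xy: "xy \<in> Off"
    then have "fst xy < U" "snd xy < U" "fst xy \<noteq> snd xy" using S unfolding Off_def by auto
    then show "measure_pmf.prob (pair_pmf (random_arrays W m) F) (B xy) \<le> 2 / real W"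
      unfolding B_def by (rule pair_collision[OF W mW F])
  qed
  also have "... = real (card Off) * (2 / real W)" by simp
  also have "... \<le> real (card S)^2 * (2 / real W)"
    using cO W by (intro mult_right_mono) (simp_all add: of_nat_le_iff[symmetric] del: of_nat_le_iff)
  finally show ?thesis .
qed

lemma final_arith:
  fixes n nmax c :: nat and W :: nat
  assumes n: "n \<le> nmax" and N: "nmax \<ge> 2" and WN: "W \<ge> nmax ^ (c + 3)"
  shows "1 - real n ^ 2 * (2 / real W) \<ge> 1 - 1 / real nmax ^ c"
proof -
  define N where "N = real nmax"
  have N2: "N \<ge> 2" unfolding N_def using N by simp
  have Npos: "N^c > 0" using N2 by simp
  have W1: "real W \<ge> N ^ (c + 3)" unfolding N_def using WN by (metis of_nat_le_iff of_nat_power)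
  have Wpos: "real W > 0" using W1 N2 by (smt (verit) zero_less_power)
  have "2 * real n ^ 2 * N^c \<le> 2 * N^2 * N^c"
    using n Npos unfolding N_def by (intro mult_right_mono mult_left_mono power_mono) simp_all
  also have "... \<le> N * N^2 * N^c" using N2 Npos by (intro mult_right_mono) simp_all
  also have "... = N ^ (c + 3)" by (simp add: power_add power2_eq_square numeral_3_eq_3 algebra_simps)
  also have "... \<le> real W" by (rule W1)
  finally have key: "2 * real n ^ 2 * N^c \<le> real W" .
  have "real n ^ 2 * (2 / real W) \<le> 1 / N^c"
    using key Wpos Npos by (simp add: field_simps)
  then show ?thesis unfolding N_def by simp
qed

theorem lemma3p1:
  fixes c :: nat
  shows "\<exists>a b :: nat. \<forall>(nmax::nat) (W::nat) (m::nat) (U::nat) (F :: (nat \<Rightarrow> nat) pmf) (S :: nat set).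
     (\<exists>k. W = 2 ^ k) \<longrightarrow> W \<ge> nmax ^ a \<longrightarrow> m \<ge> W ^ b \<longrightarrow>
     pairwise_indep_family ((\<lambda>x. x div W^4) ` {..<U}) m F \<longrightarrow>
     S \<subseteq> {..<U} \<longrightarrow> card S \<le> nmax \<longrightarrow>
     measure_pmf.prob (pair_pmf (random_arrays W m) F)
        {(A, f). inj_on (tab_weight W A f) S} \<ge> 1 - 1 / real nmax ^ c"
proof (intro exI allI impI)
  fix nmax W m U :: nat and F :: "(nat \<Rightarrow> nat) pmf" and S :: "nat set"
  assume pw: "\<exists>k. W = 2 ^ k" and WN: "W \<ge> nmax ^ (c + 3)" and mW: "m \<ge> W ^ 1"
    and F: "pairwise_indep_family ((\<lambda>x. x div W^4) ` {..<U}) m F"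
    and S: "S \<subseteq> {..<U}" and cS: "card S \<le> nmax"
  have W: "W > 0" using pw by auto
  define M where "M = pair_pmf (random_arrays W m) F"
  have compl: "measure_pmf.prob M {(A, f). inj_on (tab_weight W A f) S}
      = 1 - measure_pmf.prob M {(A, f). \<not> inj_on (tab_weight W A f) S}"
  proof -
    have "{(A, f). inj_on (tab_weight W A f) S} = space (measure_pmf M) - {(A, f). \<not> inj_on (tab_weight W A f) S}"
      by auto
    then show ?thesis using measure_pmf.prob_compl[of "{(A, f). \<not> inj_on (tab_weight W A f) S}" M] by simp
  qed
  have fb: "measure_pmf.prob M {(A, f). \<not> inj_on (tab_weight W A f) S} \<le> real (card S)^2 * (2 / real W)"
    unfolding M_def using fail_bound[OF W _ F S] mW by simp
  have lb: "measure_pmf.prob M {(A, f). inj_on (tab_weight W A f) S} \<ge> 1 - real (card S)^2 * (2 / real W)"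
    using compl fb by simp
  have lb2: "measure_pmf.prob (pair_pmf (random_arrays W m) F) {(A, f). inj_on (tab_weight W A f) S} \<ge> 1 - real (card S)^2 * (2 / real W)"
    using lb unfolding M_def .
  show "measure_pmf.prob (pair_pmf (random_arrays W m) F) {(A, f). inj_on (tab_weight W A f) S}
       \<ge> 1 - 1 / real nmax ^ c"
  proof (cases "nmax \<ge> 2")
    case True
    then show ?thesis using lb2 final_arith[OF cS True WN] by linarith
  next
    case False
    then have "nmax = 0 \<or> nmax = 1" by auto
    then show ?thesis
    proof
      assume "nmax = 1"
      then show ?thesis by simp
    next
      assume n0: "nmax = 0"
      then have "card S = 0" using cS by simp
      then have "1 \<le> measure_pmf.prob (pair_pmf (random_arrays W m) F) {(A, f). inj_on (tab_weight W A f) S}" using lb2 by simp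
      moreover have "0 \<le> 1 / real nmax ^ c" by simp
      ultimately show ?thesis by linarith
    qed
  qed
qed

end
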